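(* Let $G\subseteq U(2)$ be a finite unitary reflection group and let $\mathcal R_G=\mathcal S_1\cup\mathcal S_2$ be a partition of its set of reflecting hyperplanes into two disjoint $G$-invariant subsets. Let $E\subseteq\mathbb C^2$ be a bounded $G$-invariant domain containing the origin. For $\delta>0$ and $j=1,2$ define $$E(\mathcal S_j,\delta)=\{(z,w)\in E\times E: d(z,Y)\geq\delta,\ d(w,Y)\geq\delta\ \ \forall Y\in\mathcal R_G\setminus\mathcal S_j\},$$ $$E_{\mathrm{reg}}(\delta)=\{(z,w)\in E\times E: d(z,bE)+d(w,bE)+|g.z-w|\geq\delta\ \ \forall g\in G\},$$ where $d$ denotes Euclidean distance. Then there exists $\delta>0$ such that $$E\times E=E(\mathcal S_1,\delta)\cup E(\mathcal S_2,\delta)\cup E_{\mathrm{reg}}(\delta).$$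
   Context: A reflection is an element of $U(2)$ of finite order whose fixed point set is a complex line (its reflecting hyperplane); a finite unitary reflection group $G$ is a finite subgroup of $U(2)$ generated by reflections, $\mathcal R_G$ is the set of reflecting hyperplanes of its reflections, and $G$ acts on $\mathcal R_G$ by $g.Y=\{g.v: v\in Y\}$. *)

theory Defs
  imports "HOL-Analysis.Analysis"
begin

text \<open>Vectors of C^2 are complex^2 (Euclidean norm), elements of U(2) are 2x2 complex
  matrices complex^2^2 acting by matrix-vector multiplication.\<close>

type_synonym cvec = "complex ^ 2"
type_synonym cmat = "complex ^ 2 ^ 2"

definition cmat_adj :: "cmat \<Rightarrow> cmat" where
  "cmat_adj A = (\<chi> i j. cnj (A $ j $ i))"

definition unitary2 :: "cmat \<Rightarrow> bool" where
  "unitary2 A \<longleftrightarrow> A ** cmat_adj A = mat 1 \<and> cmat_adj A ** A = mat 1"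

definition mat_pow :: "cmat \<Rightarrow> nat \<Rightarrow> cmat" where
  "mat_pow A n = ((\<lambda>B. A ** B) ^^ n) (mat 1)"

definition finite_order :: "cmat \<Rightarrow> bool" where
  "finite_order A \<longleftrightarrow> (\<exists>n>0. mat_pow A n = mat 1)"

definition fixset :: "cmat \<Rightarrow> cvec set" where
  "fixset A = {v. A *v v = v}"

definition complex_line :: "cvec set \<Rightarrow> bool" where
  "complex_line Y \<longleftrightarrow> (\<exists>u. u \<noteq> 0 \<and> Y = range (\<lambda>c::complex. c *s u))"

definition reflection :: "cmat \<Rightarrow> bool" where
  "reflection A \<longleftrightarrow> unitary2 A \<and> finite_order A \<and> complex_line (fixset A)"

inductive_set gen_group :: "cmat set \<Rightarrow> cmat set" for S where
  gen_one: "mat 1 \<in> gen_group S"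
| gen_base: "s \<in> S \<Longrightarrow> s \<in> gen_group S"
| gen_mult: "a \<in> gen_group S \<Longrightarrow> b \<in> gen_group S \<Longrightarrow> a ** b \<in> gen_group S"
| gen_inv: "a \<in> gen_group S \<Longrightarrow> matrix_inv a \<in> gen_group S"

definition finite_unitary_reflection_group :: "cmat set \<Rightarrow> bool" where
  "finite_unitary_reflection_group G \<longleftrightarrow>
     finite G \<and> (\<forall>g\<in>G. unitary2 g) \<and>
     mat 1 \<in> G \<and> (\<forall>g\<in>G. \<forall>h\<in>G. g ** h \<in> G) \<and> (\<forall>g\<in>G. matrix_inv g \<in> G) \<and>
     G = gen_group {g\<in>G. reflection g}"

definition act :: "cmat \<Rightarrow> cvec \<Rightarrow> cvec" where
  "act g v = g *v v"

definition reflecting_hyperplanes :: "cmat set \<Rightarrow> cvec set set" where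
  "reflecting_hyperplanes G = {fixset g | g. g \<in> G \<and> reflection g}"

definition G_invariant_family :: "cmat set \<Rightarrow> cvec set set \<Rightarrow> bool" where
  "G_invariant_family G S \<longleftrightarrow> (\<forall>g\<in>G. \<forall>Y\<in>S. act g ` Y \<in> S)"

definition G_invariant_set :: "cmat set \<Rightarrow> cvec set \<Rightarrow> bool" where
  "G_invariant_set G E \<longleftrightarrow> (\<forall>g\<in>G. \<forall>z\<in>E. act g z \<in> E)"

definition domain :: "cvec set \<Rightarrow> bool" where
  "domain E \<longleftrightarrow> open E \<and> connected E \<and> E \<noteq> {}"

definition E_S :: "cmat set \<Rightarrow> cvec set \<Rightarrow> cvec set set \<Rightarrow> real \<Rightarrow> (cvec \<times> cvec) set" where
  "E_S G E S \<delta> = {(z, w) \<in> E \<times> E. \<forall>Y \<in> reflecting_hyperplanes G - S.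
       infdist z Y \<ge> \<delta> \<and> infdist w Y \<ge> \<delta>}"

definition E_reg :: "cmat set \<Rightarrow> cvec set \<Rightarrow> real \<Rightarrow> (cvec \<times> cvec) set" where
  "E_reg G E \<delta> = {(z, w) \<in> E \<times> E. \<forall>g\<in>G.
       infdist z (frontier E) + infdist w (frontier E) + norm (act g z - w) \<ge> \<delta>}"

end

theory Submission
  imports Defs
begin

lemma line_closed:
  assumes "complex_line Y" shows "closed Y" "Y \<noteq> {}"
proof -
  obtain u where u: "u \<noteq> 0" "Y = range (\<lambda>c::complex. c *s u)"
    using assms unfolding complex_line_def by blast
  have "subspace Y"
    unfolding subspace_def u
  proof (intro conjI ballI allI)
    show "0 \<in> range (\<lambda>c::complex. c *s u)" by (rule image_eqI[of _ _ 0]) auto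
  next
    fix x y assume "x \<in> range (\<lambda>c::complex. c *s u)" "y \<in> range (\<lambda>c::complex. c *s u)"
    then obtain a b where "x = a *s u" "y = b *s u" by blast
    then show "x + y \<in> range (\<lambda>c::complex. c *s u)"
      by (intro image_eqI[of _ _ "a+b"]) (simp_all add: vector_sadd_rdistrib)
  next
    fix r :: real and x assume "x \<in> range (\<lambda>c::complex. c *s u)"
    then obtain a where "x = a *s u" by blast
    have "r *\<^sub>R (a *s u) = (of_real r * a) *s u"
      unfolding vec_eq_iff by (simp add: scaleR_conv_of_real[where 'a=complex])
    then show "r *\<^sub>R x \<in> range (\<lambda>c::complex. c *s u)"
      using \<open>x = a *s u\<close> by (metis rangeI)
  qed
  then show "closed Y" by (rule closed_subspace)
  show "Y \<noteq> {}" using u by auto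
qed

lemma lines_eq:
  assumes "complex_line Y1" "complex_line Y2" "z \<in> Y1" "z \<in> Y2" "z \<noteq> 0"
  shows "Y1 = Y2"
proof -
  have key: "Y = range (\<lambda>c::complex. c *s z)" if L: "complex_line Y" and zY: "z \<in> Y" for Y
  proof -
    obtain u where u: "u \<noteq> 0" "Y = range (\<lambda>c::complex. c *s u)"
      using L unfolding complex_line_def by blast
    have "z \<in> range (\<lambda>c::complex. c *s u)" using zY u(2) by simp
    then obtain a where a: "z = a *s u" by (auto simp: image_iff)
    with assms(5) have "a \<noteq> 0" by (metis vector_smult_lzero)
    have "range (\<lambda>c::complex. c *s u) = range (\<lambda>c::complex. c *s z)"
    proof (intro set_eqI iffI)
      fix x assume "x \<in> range (\<lambda>c::complex. c *s u)"
      then obtain c where "x = c *s u" by blast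
      have "(c / a) *s z = ((c / a) * a) *s u" using a by (simp add: vector_smult_assoc)
      also have "(c / a) * a = c" using \<open>a \<noteq> 0\<close> by simp
      finally have "x = (c / a) *s z" using \<open>x = c *s u\<close> by simp
      then show "x \<in> range (\<lambda>c::complex. c *s z)" by blast
    next
      fix x assume "x \<in> range (\<lambda>c::complex. c *s z)"
      then obtain c where "x = c *s z" by blast
      then have "x = (c * a) *s u" using a by (simp add: vector_smult_assoc)
      then show "x \<in> range (\<lambda>c::complex. c *s u)" by blast
    qed
    then show ?thesis using u(2) by (rule trans[rotated])
  qed
  show ?thesis using key[OF assms(1,3)] key[OF assms(2,4)] by (rule trans[OF _ sym])
qed

lemma unitary_inv_cancel:
  assumes "unitary2 g" shows "matrix_inv g *v (g *v z) = z"
proof -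
  have "\<exists>A'. g ** A' = mat 1 \<and> A' ** g = mat 1" using assms unfolding unitary2_def by blast
  then have "g ** matrix_inv g = mat 1 \<and> matrix_inv g ** g = mat 1" unfolding matrix_inv_def by (rule someI_ex)
  then have "matrix_inv g ** g = mat 1" by simp
  then show ?thesis by (metis matrix_vector_mul_assoc matrix_vector_mul_lid)
qed

lemma cont_act: "continuous_on S (\<lambda>z::cvec. g *v z)"
  by (intro continuous_intros)


theorem lemma6p1:
  fixes G :: "cmat set" and S1 S2 :: "cvec set set" and E :: "cvec set"
  assumes "finite_unitary_reflection_group G"
    and "reflecting_hyperplanes G = S1 \<union> S2" and "S1 \<inter> S2 = {}"
    and "G_invariant_family G S1" and "G_invariant_family G S2"
    and "bounded E" and "domain E" and "0 \<in> E" and "G_invariant_set G E"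
  shows "\<exists>\<delta>>0. E \<times> E = E_S G E S1 \<delta> \<union> E_S G E S2 \<delta> \<union> E_reg G E \<delta>"
proof -
  note fu = assms(1)[unfolded finite_unitary_reflection_group_def]
  have finG: "finite G" using fu by blast
  have unit: "\<And>g. g \<in> G \<Longrightarrow> unitary2 g" using fu by blast
  have invG: "\<And>g. g \<in> G \<Longrightarrow> matrix_inv g \<in> G" using fu by blast
  have oneG: "mat 1 \<in> G" using fu by blast
  have R_eq: "reflecting_hyperplanes G = fixset ` {g\<in>G. reflection g}"
    unfolding reflecting_hyperplanes_def by auto
  have finR: "finite (reflecting_hyperplanes G)" unfolding R_eq using finG by simp
  have lineR: "complex_line Y" if YR: "Y \<in> reflecting_hyperplanes G" for Y
  proof -
    obtain g where "Y = fixset g" "reflection g"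
      using YR unfolding reflecting_hyperplanes_def by blast
    then show ?thesis unfolding reflection_def by simp
  qed
  have RS1: "reflecting_hyperplanes G - S1 = S2" and RS2: "reflecting_hyperplanes G - S2 = S1"
    using assms(2,3) by auto
  have sub: "E_S G E S d \<subseteq> E \<times> E" "E_reg G E d \<subseteq> E \<times> E" for S d
    unfolding E_S_def E_reg_def by auto
  show ?thesis
  proof (cases "S1 = {} \<or> S2 = {}")
    case True
    have ESe: "E_S G E S d = E \<times> E" if "reflecting_hyperplanes G - S = {}" for S d
      unfolding E_S_def that by auto
    show ?thesis
    proof (intro exI[of _ 1] conjI)
      show "(0::real) < 1" by simp
      show "E \<times> E = E_S G E S1 1 \<union> E_S G E S2 1 \<union> E_reg G E 1"
      proof (cases "S2 = {}")
        case True
        then have "E_S G E S1 1 = E \<times> E" using ESe RS1 by simp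
        then show ?thesis using sub(1)[of S2 1] sub(1)[of S1 1] sub(2)[of 1] by (simp add: Un_absorb2)
      next
        case False
        then have "S1 = {}" using \<open>S1 = {} \<or> S2 = {}\<close> by simp
        then have "E_S G E S2 1 = E \<times> E" using ESe RS2 by simp
        then show ?thesis using sub(1)[of S2 1] sub(1)[of S1 1] sub(2)[of 1] by blast
      qed
    qed
  next
    case False
    define F where "F = frontier E"
    define K where "K = closure E"
    have openE: "open E" using assms(7) unfolding domain_def by blast
    have Fne: "F \<noteq> {}" unfolding F_def frontier_eq_empty
      using assms(6,8) not_bounded_UNIV by auto
    have Fcl: "closed F" unfolding F_def by simp
    have zF: "0 \<notin> F" unfolding F_def frontier_def using openE assms(8) interior_open by auto
    have lift: "\<exists>Y'\<in>S. z \<in> Y'"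
      if inv: "G_invariant_family G S" and SR: "S \<subseteq> reflecting_hyperplanes G" and YS: "Y \<in> S"
        and gG: "g \<in> G" and dz: "infdist z Y = 0 \<or> infdist (g *v z) Y = 0" for S Y g z
    proof -
      have L: "complex_line Y" using lineR SR YS by blast
      note cl = line_closed[OF L]
      show ?thesis
      proof (cases "infdist z Y = 0")
        case True
        then have "z \<in> Y" using in_closed_iff_infdist_zero[OF cl] by blast
        then show ?thesis using YS by blast
      next
        case False
        then have "g *v z \<in> Y" using dz in_closed_iff_infdist_zero[OF cl] by blast
        then have "matrix_inv g *v (g *v z) \<in> act (matrix_inv g) ` Y" unfolding act_def by blast
        then have "z \<in> act (matrix_inv g) ` Y" using unitary_inv_cancel[OF unit[OF gG]] by simp
        moreover have "act (matrix_inv g) ` Y \<in> S"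
          using inv invG[OF gG] YS unfolding G_invariant_family_def by blast
        ultimately show ?thesis by blast
      qed
    qed
    have nopt: False
      if gG: "g \<in> G" and Y1: "Y1 \<in> S2" and Y2: "Y2 \<in> S1" and dF: "infdist z F = 0"
        and wz: "w = g *v z" and d1: "infdist z Y1 = 0 \<or> infdist w Y1 = 0"
        and d2: "infdist z Y2 = 0 \<or> infdist w Y2 = 0" for g Y1 Y2 z w
    proof -
      have "z \<in> F" using dF in_closed_iff_infdist_zero[OF Fcl Fne] by blast
      then have z0: "z \<noteq> 0" using zF by blast
      obtain A where A: "A \<in> S2" "z \<in> A"
        using lift[OF assms(5) _ Y1 gG] d1 wz assms(2) by blast
      obtain B where B: "B \<in> S1" "z \<in> B"
        using lift[OF assms(4) _ Y2 gG] d2 wz assms(2) by blast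
      have "A \<noteq> B" using A B assms(3) by blast
      moreover have "A = B"
        using lines_eq[OF lineR lineR A(2) B(2) z0] A(1) B(1) assms(2) by blast
      ultimately show False by blast
    qed
    define h where "h g Y1 Y2 p = max (infdist (fst p) F + infdist (snd p) F + norm (act g (fst p) - snd p))
       (max (min (infdist (fst p) Y1) (infdist (snd p) Y1)) (min (infdist (fst p) Y2) (infdist (snd p) Y2)))"
      for g Y1 Y2 and p :: "cvec \<times> cvec"
    have cK: "compact (K \<times> K)" unfolding K_def
      using assms(6) by (intro compact_Times) (simp_all add: compact_closure)
    have neK: "K \<times> K \<noteq> {}" unfolding K_def using assms(8) closure_subset by blast
    define T where "T = G \<times> S2 \<times> S1"
    have pos: "\<exists>d>0. \<forall>p\<in>K \<times> K. d \<le> h g Y1 Y2 p" if tT: "(g, Y1, Y2) \<in> T" for g Y1 Y2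
    proof -
      have gG: "g \<in> G" and Y1: "Y1 \<in> S2" and Y2: "Y2 \<in> S1" using tT unfolding T_def by auto
      have "continuous_on (K \<times> K) (h g Y1 Y2)"
      proof -
        have cg: "continuous_on (K \<times> K) (\<lambda>p. g *v fst p)"
          by (rule continuous_on_compose2[OF matrix_vector_mult_linear_continuous_on[of UNIV g]])
            (auto intro: continuous_intros)
        show ?thesis unfolding h_def act_def by (intro continuous_intros cg)
      qed
      then obtain p0 where p0: "p0 \<in> K \<times> K" "\<forall>p\<in>K \<times> K. h g Y1 Y2 p0 \<le> h g Y1 Y2 p"
        using continuous_attains_inf[OF cK neK] by blast
      obtain z w where zw: "p0 = (z, w)" by (cases p0)
      have "h g Y1 Y2 p0 > 0"
      proof (rule ccontr)
        assume "\<not> h g Y1 Y2 p0 > 0"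
        then have le: "h g Y1 Y2 (z, w) \<le> 0" using zw by simp
        have n1: "0 \<le> infdist z F" "0 \<le> infdist w F" "0 \<le> norm (act g z - w)"
          by (simp_all add: infdist_nonneg)
        have n2: "0 \<le> infdist z Y1" "0 \<le> infdist w Y1" "0 \<le> infdist z Y2" "0 \<le> infdist w Y2"
          by (simp_all add: infdist_nonneg)
        have s0: "infdist z F + infdist w F + norm (act g z - w) \<le> 0"
          using le unfolding h_def by simp
        have e1: "infdist z F = 0" using s0 n1 by linarith
        have e2: "norm (act g z - w) = 0" using s0 n1 by linarith
        have e3: "infdist z Y1 = 0 \<or> infdist w Y1 = 0" "infdist z Y2 = 0 \<or> infdist w Y2 = 0"
          using le n2 unfolding h_def by (auto simp: min_def split: if_splits)
        have "w = g *v z" using e2 unfolding act_def by simp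
        then show False using nopt[OF gG Y1 Y2 e1 _ e3] by blast
      qed
      then show ?thesis using p0 by blast
    qed
    have "\<forall>t\<in>T. \<exists>d>0. \<forall>p\<in>K \<times> K. d \<le> h (fst t) (fst (snd t)) (snd (snd t)) p"
      using pos by auto
    then obtain D where D: "\<And>t. t \<in> T \<Longrightarrow> D t > 0 \<and> (\<forall>p\<in>K \<times> K. D t \<le> h (fst t) (fst (snd t)) (snd (snd t)) p)"
      by metis
    have finT: "finite T" unfolding T_def using finG finR assms(2)
      by (intro finite_cartesian_product) (auto intro: finite_subset)
    have neT: "T \<noteq> {}" unfolding T_def using oneG False by blast
    define \<delta> where "\<delta> = Min (D ` T)"
    have dpos: "\<delta> > 0" unfolding \<delta>_def using finT neT D by (subst Min_gr_iff) auto
    have dle: "\<delta> \<le> D t" if "t \<in> T" for t unfolding \<delta>_def using finT that by simp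
    show ?thesis
    proof (intro exI[of _ \<delta>] conjI dpos)
      show "E \<times> E = E_S G E S1 \<delta> \<union> E_S G E S2 \<delta> \<union> E_reg G E \<delta>"
      proof
        show "E_S G E S1 \<delta> \<union> E_S G E S2 \<delta> \<union> E_reg G E \<delta> \<subseteq> E \<times> E" using sub by blast
      next
        show "E \<times> E \<subseteq> E_S G E S1 \<delta> \<union> E_S G E S2 \<delta> \<union> E_reg G E \<delta>"
        proof
          fix p assume pE: "p \<in> E \<times> E"
          obtain z w where zw: "p = (z, w)" by (cases p)
          have zE: "z \<in> E" "w \<in> E" using pE zw by auto
          show "p \<in> E_S G E S1 \<delta> \<union> E_S G E S2 \<delta> \<union> E_reg G E \<delta>"
          proof (rule ccontr)
            assume nin: "p \<notin> E_S G E S1 \<delta> \<union> E_S G E S2 \<delta> \<union> E_reg G E \<delta>"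
            obtain Y1 where Y1: "Y1 \<in> S2" "infdist z Y1 < \<delta> \<or> infdist w Y1 < \<delta>"
              using nin zE unfolding zw E_S_def RS1 by (auto simp: not_le)
            obtain Y2 where Y2: "Y2 \<in> S1" "infdist z Y2 < \<delta> \<or> infdist w Y2 < \<delta>"
              using nin zE unfolding zw E_S_def RS2 by (auto simp: not_le)
            obtain g where g: "g \<in> G"
              "infdist z (frontier E) + infdist w (frontier E) + norm (act g z - w) < \<delta>"
              using nin zE unfolding zw E_reg_def by (auto simp: not_le)
            have tT: "(g, Y1, Y2) \<in> T" unfolding T_def using g Y1 Y2 by simp
            have "(z, w) \<in> K \<times> K" unfolding K_def using zE closure_subset by blast
            then have "D (g, Y1, Y2) \<le> h g Y1 Y2 (z, w)" using D[OF tT] by simp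
            moreover have "h g Y1 Y2 (z, w) < \<delta>"
              unfolding h_def F_def using g(2) Y1(2) Y2(2) by auto
            ultimately show False using dle[OF tT] by simp
          qed
        qed
      qed
    qed
  qed
qed

end
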